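(* Let $A=(a_{ij})$ be a real $n\times n$ matrix with nonnegative entries, $\mathbf 1=(1,\ldots,1)^{\mathrm T}$, $L=\operatorname{diag}(A\mathbf 1)-A$, $P=I-\tau L$ with $0<\tau\le\bigl(\max_i\sum_{j\neq i}a_{ij}\bigr)^{-1}$, and let $S$ be the orthogonal projection of $\mathbb R^n$ onto $\mathcal R(L)\oplus\operatorname{span}(\mathbf 1)$. Then $(PS)^k=P^kS$ for every $k=1,2,\ldots$.
   Context: $\mathcal R(L)$ denotes the range of $L$; $I$ is the identity matrix. *)

theory Defs
  imports "HOL-Analysis.Analysis"
begin

fun matpow :: "real^'n^'n \<Rightarrow> nat \<Rightarrow> real^'n^'n" where
  "matpow M 0 = mat 1"
| "matpow M (Suc k) = M ** matpow M k"

definition diag_mat :: "real^'n \<Rightarrow> real^'n^'n" where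
  "diag_mat d = (\<chi> i j. if i = j then d $ i else 0)"

definition col_range :: "real^'n^'m \<Rightarrow> (real^'m) set" where
  "col_range M = range (\<lambda>x. M *v x)"

definition is_orth_proj :: "real^'n^'n \<Rightarrow> (real^'n) set \<Rightarrow> bool" where
  "is_orth_proj S V \<longleftrightarrow> (\<forall>x. S *v x \<in> V \<and> (\<forall>v\<in>V. inner (x - S *v x) v = 0))"

end

theory Submission
  imports Defs
begin

lemma proj_fix:
  assumes "is_orth_proj S V" "subspace V" "v \<in> V"
  shows "S *v v = v"
proof -
  have sv: "S *v v \<in> V" using assms(1) unfolding is_orth_proj_def by blast
  have d: "v - S *v v \<in> V" using assms(2,3) sv by (simp add: subspace_diff)
  have "inner (v - S *v v) (v - S *v v) = 0" using assms(1) d unfolding is_orth_proj_def by blast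
  thus ?thesis by simp
qed

lemma matpow_inv:
  assumes "subspace V" "\<And>v. v \<in> V \<Longrightarrow> P *v v \<in> V" "v \<in> V"
  shows "matpow P k *v v \<in> V"
  using assms(3)
proof (induction k arbitrary: v)
  case 0 then show ?case by simp
next
  case (Suc k)
  have "matpow P (Suc k) *v v = P *v (matpow P k *v v)"
    by (simp add: matrix_vector_mul_assoc)
  then show ?case using Suc assms(2) by simp
qed

theorem lemmaA1:
  fixes A S :: "real^'n^'n" and \<tau> :: real
  assumes nonneg: "\<forall>i j. A $ i $ j \<ge> 0"
    and tau_pos: "0 < \<tau>"
    and tau_le: "\<tau> * (MAX i. \<Sum>j\<in>UNIV - {i}. A $ i $ j) \<le> 1"
    and S_proj: "is_orth_proj S
        {u + w | u w. u \<in> col_range (diag_mat (A *v (\<chi> i. 1)) - A) \<and> w \<in> span {(\<chi> i. 1)}}"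
  shows "\<forall>k\<ge>1. matpow ((mat 1 - \<tau> *\<^sub>R (diag_mat (A *v (\<chi> i. 1)) - A)) ** S) k
              = matpow (mat 1 - \<tau> *\<^sub>R (diag_mat (A *v (\<chi> i. 1)) - A)) k ** S"
proof -
  define L where "L = diag_mat (A *v (\<chi> i. 1)) - A"
  define P where "P = mat 1 - \<tau> *\<^sub>R L"
  define V where "V = {u + w | u w. u \<in> col_range L \<and> w \<in> span {(\<chi> i. 1) :: real^'n}}"
  have sub1: "subspace (col_range L)"
    unfolding col_range_def
    by (intro linear_subspace_image subspace_UNIV) (auto simp: matrix_vector_mul_linear)
  have V: "subspace V" unfolding V_def
    by (intro subspace_sums sub1 subspace_span)
  have Sp: "is_orth_proj S V" using S_proj unfolding V_def L_def by simp
  have LV: "L *v v \<in> V" for v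
  proof -
    have "L *v v \<in> col_range L" unfolding col_range_def by simp
    moreover have "(0::real^'n) \<in> span {(\<chi> i. 1)}" by (simp add: span_zero)
    ultimately show ?thesis unfolding V_def by force
  qed
  have PV: "P *v v \<in> V" if "v \<in> V" for v
  proof -
    have "P *v v = v - \<tau> *\<^sub>R (L *v v)"
      unfolding P_def by (simp add: matrix_vector_mult_diff_rdistrib scaleR_matrix_vector_assoc)
    thus ?thesis using that LV V by (simp add: subspace_diff subspace_scale)
  qed
  have key: "S ** matpow P k ** S = matpow P k ** S" for k
  proof -
    have "(S ** matpow P k ** S) *v x = (matpow P k ** S) *v x" for x
    proof -
      have sx: "S *v x \<in> V" using Sp unfolding is_orth_proj_def by blast
      have "matpow P k *v (S *v x) \<in> V" using matpow_inv[OF V PV sx] by blast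
      hence "S *v (matpow P k *v (S *v x)) = matpow P k *v (S *v x)"
        using proj_fix[OF Sp V] by blast
      thus ?thesis by (simp add: matrix_vector_mul_assoc[symmetric])
    qed
    thus ?thesis by (simp add: matrix_eq)
  qed
  have main: "matpow (P ** S) (Suc k) = matpow P (Suc k) ** S" for k
  proof (induction k)
    case 0 then show ?case by simp
  next
    case (Suc k)
    have "matpow (P ** S) (Suc (Suc k)) = P ** S ** (matpow P (Suc k) ** S)"
      using Suc by simp
    also have "\<dots> = P ** (S ** matpow P (Suc k) ** S)" by (simp add: matrix_mul_assoc)
    also have "\<dots> = P ** (matpow P (Suc k) ** S)" using key[of "Suc k"] by (simp only:)
    also have "\<dots> = matpow P (Suc (Suc k)) ** S" by (simp add: matrix_mul_assoc)
    finally show ?case .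
  qed
  show ?thesis
  proof (intro allI impI)
    fix k :: nat assume "k \<ge> 1"
    then obtain m where "k = Suc m" by (cases k) auto
    thus "matpow ((mat 1 - \<tau> *\<^sub>R (diag_mat (A *v (\<chi> i. 1)) - A)) ** S) k
              = matpow (mat 1 - \<tau> *\<^sub>R (diag_mat (A *v (\<chi> i. 1)) - A)) k ** S"
      using main[of m] unfolding P_def L_def by simp
  qed
qed

end
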